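(* For every $0<\varepsilon\le1$ there exists a function $\hat a\in C^\infty(\mathbb R)$, $\hat a\not\equiv0$, with $\operatorname{supp}\hat a\subset[-2,2]$, such that for every integer $n\ge1$ the trigonometric polynomial $$L_n(\theta):=\sum_{j\in\mathbb Z}\hat a\Big(\frac jn\Big)e^{ij\theta}$$ satisfies $$|L_n(\theta)|\le c\,n\exp\left\{-\frac{c'\varepsilon\, n|\theta|}{[\ln(e+n|\theta|)]^{1+\varepsilon}}\right\},\qquad \theta\in[-\pi,\pi],$$ where $c'>0$ is an absolute constant and $c$ depends only on $\varepsilon$. *)

theory Defs
  imports "HOL-Analysis.Analysis"
begin

definition smooth_real :: "(real \<Rightarrow> real) \<Rightarrow> bool" where
  "smooth_real f \<longleftrightarrow> (\<forall>k x. ((deriv ^^ k) f) differentiable (at x))"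

text \<open>The trigonometric polynomial L_n(theta) = sum over j in Z of a(j/n) e^{i j theta};
  the sum over Z is taken literally as an infinite (finitely supported) sum.\<close>
definition Lpoly :: "(real \<Rightarrow> real) \<Rightarrow> nat \<Rightarrow> real \<Rightarrow> complex" where
  "Lpoly a n \<theta> = (\<Sum>\<^sub>\<infinity>j\<in>(UNIV::int set). complex_of_real (a (real_of_int j / real n)) * cis (real_of_int j * \<theta>))"

end

theory Submission
  imports Defs
begin


definition Tav :: "real \<Rightarrow> (real\<Rightarrow>real) \<Rightarrow> real \<Rightarrow> real" where
  "Tav d h x = integral {x-d..x+d} h / (2*d)"
definition Dif :: "real \<Rightarrow> (real\<Rightarrow>real) \<Rightarrow> real \<Rightarrow> real" where
  "Dif d h x = (h (x+d) - h (x-d)) / (2*d)"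

lemma Tav_deriv:
  assumes h: "continuous_on UNIV h" and d: "0 < d"
  shows "(Tav d h has_real_derivative Dif d h x) (at x)"
proof -
  define a where "a = x - d - 1"
  define b where "b = x + d + 1"
  define P where "P u = integral {a..u} h" for u
  have hc: "continuous_on {a..b} h" using h continuous_on_subset by blast
  have dP: "(P has_real_derivative h u) (at u)" if "a < u" "u < b" for u
  proof -
    have "(P has_real_derivative h u) (at u within {a..b})"
      unfolding P_def using integral_has_real_derivative[OF hc, of u] that by simp
    moreover have "u \<in> interior {a..b}" using that by simp
    ultimately show ?thesis by (metis at_within_interior)
  qed
  have e1: "(P has_real_derivative h (x+d)) (at (x+d))" by (rule dP) (use d in \<open>simp_all add: a_def b_def\<close>)
  have e2: "(P has_real_derivative h (x-d)) (at (x-d))" by (rule dP) (use d in \<open>simp_all add: a_def b_def\<close>)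
  have s1: "((\<lambda>y. y + d) has_real_derivative 1) (at x)" by (rule derivative_eq_intros refl)+ simp
  have s2: "((\<lambda>y. y - d) has_real_derivative 1) (at x)" by (rule derivative_eq_intros refl)+ simp
  have d1: "((\<lambda>y. P (y + d)) has_real_derivative h (x+d)) (at x)"
    using DERIV_chain2[OF e1 s1] by (simp only: mult_1_right)
  have d2: "((\<lambda>y. P (y - d)) has_real_derivative h (x-d)) (at x)"
    using DERIV_chain2[OF e2 s2] by (simp only: mult_1_right)
  have dd: "((\<lambda>y. (P (y + d) - P (y - d)) / (2*d)) has_real_derivative Dif d h x) (at x)"
    unfolding Dif_def using DERIV_cdivide[OF DERIV_diff[OF d1 d2], of "2*d"] by simp
  show ?thesis
  proof (rule has_field_derivative_transform_within_open[OF dd, of "ball x 1"])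
    fix y assume "y \<in> ball x 1"
    then have y: "a \<le> y - d" "y + d \<le> b" using d unfolding a_def b_def mem_ball dist_real_def by linarith+
    have "integral {a..y-d} h + integral {y-d..y+d} h = integral {a..y+d} h"
      apply (rule Henstock_Kurzweil_Integration.integral_combine)
      using y d by (auto intro!: integrable_continuous_interval continuous_on_subset[OF h])
    then show "(P (y + d) - P (y - d)) / (2*d) = Tav d h y"
      unfolding Tav_def P_def by (simp add: algebra_simps)
  qed simp_all
qed

lemma Dif_deriv:
  assumes "\<And>y. (h has_real_derivative h' y) (at y)" and d: "0 < d"
  shows "(Dif d h has_real_derivative Dif d h' x) (at x)"
proof -
  have s1: "((\<lambda>y. y + d) has_real_derivative 1) (at x)" by (rule derivative_eq_intros refl)+ simp
  have s2: "((\<lambda>y. y - d) has_real_derivative 1) (at x)" by (rule derivative_eq_intros refl)+ simp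
  have d1: "((\<lambda>y. h (y + d)) has_real_derivative h' (x+d)) (at x)"
    using DERIV_chain2[OF assms(1) s1] by (simp only: mult_1_right)
  have d2: "((\<lambda>y. h (y - d)) has_real_derivative h' (x-d)) (at x)"
    using DERIV_chain2[OF assms(1) s2] by (simp only: mult_1_right)
  show ?thesis
    unfolding Dif_def[abs_def] using DERIV_cdivide[OF DERIV_diff[OF d1 d2], of "2*d"] d by simp
qed

lemma Tav_cont:
  assumes h: "continuous_on UNIV h" and d: "0 < d"
  shows "continuous_on UNIV (Tav d h)"
  using Tav_deriv[OF assms] by (meson DERIV_isCont continuous_at_imp_continuous_on)

lemma Dif_cont:
  assumes h: "continuous_on UNIV h" and d: "0 < d"
  shows "continuous_on UNIV (Dif d h)"
  unfolding Dif_def[abs_def]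
  by (intro continuous_intros continuous_on_compose2[OF h]) (use d in auto)

lemma Tav_diff_bound:
  assumes h1: "continuous_on UNIV h1" and h2: "continuous_on UNIV h2" and d: "0 < d"
    and B: "\<And>y. y \<in> {x-d..x+d} \<Longrightarrow> \<bar>h1 y - h2 y\<bar> \<le> B"
  shows "\<bar>Tav d h1 x - Tav d h2 x\<bar> \<le> B"
proof -
  have i1: "h1 integrable_on {x-d..x+d}" by (rule integrable_continuous_interval, rule continuous_on_subset[OF h1]) auto
  have i2: "h2 integrable_on {x-d..x+d}" by (rule integrable_continuous_interval, rule continuous_on_subset[OF h2]) auto
  have "Tav d h1 x - Tav d h2 x = integral {x-d..x+d} (\<lambda>y. h1 y - h2 y) / (2*d)"
    unfolding Tav_def integral_diff[OF i1 i2] using d by (simp add: diff_divide_distrib)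
  moreover have "norm (integral {x-d..x+d} (\<lambda>y. h1 y - h2 y)) \<le> B * ((x+d) - (x-d))"
    by (rule integral_bound) (use d B in \<open>auto intro!: continuous_intros continuous_on_subset[OF h1] continuous_on_subset[OF h2]\<close>)
  ultimately show ?thesis using d by (simp add: abs_divide divide_le_eq)
qed

lemma Dif_diff_bound:
  assumes d: "0 < d" and B: "\<And>y. \<bar>h1 y - h2 y\<bar> \<le> B"
  shows "\<bar>Dif d h1 x - Dif d h2 x\<bar> \<le> B / d"
proof -
  define A where "A = (h1 (x+d) - h2 (x+d)) - (h1 (x-d) - h2 (x-d))"
  have e: "Dif d h1 x - Dif d h2 x = A / (2*d)"
    unfolding Dif_def A_def by (simp add: diff_divide_distrib)
  have a: "\<bar>A\<bar> \<le> 2 * B" unfolding A_def using B[of "x+d"] B[of "x-d"] by linarith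
  have "\<bar>A / (2*d)\<bar> = \<bar>A\<bar> / (2*d)" using d by (simp add: abs_divide)
  also have "\<dots> \<le> (2*B) / (2*d)" by (rule divide_right_mono[OF a]) (use d in simp)
  also have "\<dots> = B / d" by simp
  finally show ?thesis using e by simp
qed

lemma Tav_zero: "Tav d (\<lambda>_. 0) = (\<lambda>_. 0)"
  by (simp add: Tav_def[abs_def])
lemma Dif_zero: "Dif d (\<lambda>_. 0) = (\<lambda>_. 0)"
  by (simp add: Dif_def[abs_def])

lemma Tav_supp:
  assumes "\<And>y. r < \<bar>y\<bar> \<Longrightarrow> h y = 0" "0 < d" "r + d < \<bar>x\<bar>"
  shows "Tav d h x = 0"
proof -
  have "integral {x-d..x+d} h = integral {x-d..x+d} (\<lambda>_. 0::real)"
    by (rule integral_cong) (use assms in auto)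
  then show ?thesis by (simp add: Tav_def)
qed

lemma Dif_supp:
  assumes "\<And>y. r < \<bar>y\<bar> \<Longrightarrow> h y = 0" "0 < d" "r + d < \<bar>x\<bar>"
  shows "Dif d h x = 0"
  using assms(1)[of "x+d"] assms(1)[of "x-d"] assms(2,3) by (simp add: Dif_def)

definition opr :: "(nat \<Rightarrow> real) \<Rightarrow> nat \<Rightarrow> nat \<Rightarrow> (real\<Rightarrow>real) \<Rightarrow> real \<Rightarrow> real" where
  "opr d m i h = (if i < m then Dif (d i) h else Tav (d i) h)"

lemma opr_lt: "i < m \<Longrightarrow> opr d m i h = Dif (d i) h" by (simp add: opr_def)
lemma opr_ge: "\<not> i < m \<Longrightarrow> opr d m i h = Tav (d i) h" by (simp add: opr_def)

lemma chn_cont: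
  assumes "\<And>i. 0 < d i" "continuous_on UNIV h"
  shows "continuous_on UNIV (foldr (opr d m) xs h)"
  by (induction xs) (auto simp: opr_def assms intro!: Tav_cont Dif_cont)

lemma chn_zero: "foldr (opr d m) xs (\<lambda>_. 0) = (\<lambda>_. 0)"
  by (induction xs) (auto simp: opr_def Tav_zero Dif_zero)

lemma chn_bound:
  assumes dp: "\<And>i. 0 < d i" and h1: "continuous_on UNIV h1" and h2: "continuous_on UNIV h2"
    and B: "\<And>y. \<bar>h1 y - h2 y\<bar> \<le> B"
  shows "\<bar>foldr (opr d m) xs h1 x - foldr (opr d m) xs h2 x\<bar>
          \<le> B * prod_list (map (\<lambda>i. if i < m then 1 / d i else 1) xs)"
proof (induction xs arbitrary: x)
  case Nil
  then show ?case using B by simp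
next
  case (Cons i xs)
  let ?g1 = "foldr (opr d m) xs h1" and ?g2 = "foldr (opr d m) xs h2"
  let ?p = "prod_list (map (\<lambda>i. if i < m then 1 / d i else 1) xs)"
  have c1: "continuous_on UNIV ?g1" by (rule chn_cont[OF dp h1])
  have c2: "continuous_on UNIV ?g2" by (rule chn_cont[OF dp h2])
  show ?case
  proof (cases "i < m")
    case True
    have "\<bar>Dif (d i) ?g1 x - Dif (d i) ?g2 x\<bar> \<le> (B * ?p) / d i"
      by (rule Dif_diff_bound[OF dp Cons.IH])
    then show ?thesis using True by (simp add: opr_lt)
  next
    case False
    have "\<bar>Tav (d i) ?g1 x - Tav (d i) ?g2 x\<bar> \<le> B * ?p"
      by (rule Tav_diff_bound[OF c1 c2 dp Cons.IH])
    then show ?thesis using False by (simp add: opr_ge)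
  qed
qed

lemma chn_supp:
  assumes dp: "\<And>i. 0 < d i" and hz: "\<And>y. r < \<bar>y\<bar> \<Longrightarrow> h y = 0"
  shows "r + sum_list (map d xs) < \<bar>x\<bar> \<Longrightarrow> foldr (opr d m) xs h x = 0"
proof (induction xs arbitrary: x)
  case Nil
  then show ?case using hz by simp
next
  case (Cons i xs)
  have z: "\<And>y. r + sum_list (map d xs) < \<bar>y\<bar> \<Longrightarrow> foldr (opr d m) xs h y = 0" by (rule Cons.IH)
  have lt: "r + sum_list (map d xs) + d i < \<bar>x\<bar>" using Cons.prems by simp
  show ?case
    using Tav_supp[of "r + sum_list (map d xs)" "foldr (opr d m) xs h" "d i" x, OF z dp lt]
      Dif_supp[of "r + sum_list (map d xs)" "foldr (opr d m) xs h" "d i" x, OF z dp lt]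
    by (cases "i < m") (simp_all add: opr_lt opr_ge)
qed

lemma opr_eq: "m < i \<Longrightarrow> opr d m i = opr d (Suc m) i"
  by (simp add: opr_def fun_eq_iff)

lemma chn_deriv:
  assumes dp: "\<And>i. 0 < d i" and h: "continuous_on UNIV h" and mK: "m < K"
  shows "j \<le> m \<Longrightarrow> (foldr (opr d m) [j..<K] h has_real_derivative foldr (opr d (Suc m)) [j..<K] h x) (at x)"
proof (induction "m - j" arbitrary: j x)
  case 0
  then have j: "j = m" by simp
  have eq: "foldr (opr d m) [Suc m..<K] h = foldr (opr d (Suc m)) [Suc m..<K] h"
    by (rule foldr_cong) (auto simp: opr_eq)
  have "(Tav (d m) (foldr (opr d m) [Suc m..<K] h) has_real_derivative
         Dif (d m) (foldr (opr d m) [Suc m..<K] h) x) (at x)"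
    by (rule Tav_deriv[OF chn_cont[OF dp h] dp])
  then show ?case using mK j eq by (simp add: upt_conv_Cons opr_lt opr_ge)
next
  case (Suc n)
  then have jm: "j < m" "n = m - Suc j" by auto
  have IH: "\<And>y. (foldr (opr d m) [Suc j..<K] h has_real_derivative foldr (opr d (Suc m)) [Suc j..<K] h y) (at y)"
    using Suc jm by auto
  have "(Dif (d j) (foldr (opr d m) [Suc j..<K] h) has_real_derivative
         Dif (d j) (foldr (opr d (Suc m)) [Suc j..<K] h) x) (at x)"
    by (rule Dif_deriv[OF IH dp])
  then show ?case using mK jm by (simp add: upt_conv_Cons opr_lt opr_ge)
qed

definition phi :: "real \<Rightarrow> real" where "phi x = max 0 (1 - \<bar>x\<bar>)"

lemma phi_cont: "continuous_on UNIV phi"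
  unfolding phi_def[abs_def] by (intro continuous_intros)

lemma phi_bound: "\<bar>phi x\<bar> \<le> 1"
  by (simp add: phi_def)

lemma phi_supp: "1 < \<bar>x\<bar> \<Longrightarrow> phi x = 0"
  by (simp add: phi_def)

lemma phi_lip: "\<bar>phi x - phi y\<bar> \<le> \<bar>x - y\<bar>"
  by (simp add: phi_def)

lemma Tav_phi: assumes "0 < \<delta>" shows "\<bar>Tav \<delta> phi x - phi x\<bar> \<le> \<delta>"
proof -
  have "Tav \<delta> (\<lambda>_. phi x) x = phi x" using assms by (simp add: Tav_def)
  moreover have "\<bar>Tav \<delta> phi x - Tav \<delta> (\<lambda>_. phi x) x\<bar> \<le> \<delta>"
  proof (rule Tav_diff_bound[OF phi_cont _ assms])
    fix y assume "y \<in> {x - \<delta>..x + \<delta>}"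
    then show "\<bar>phi y - phi x\<bar> \<le> \<delta>" using phi_lip[of y x] by auto
  qed simp
  ultimately show ?thesis by simp
qed

locale bumpseq =
  fixes d :: "nat \<Rightarrow> real" and R :: "nat \<Rightarrow> real"
  assumes dpos: "\<And>i. 0 < d i"
    and dsum: "\<And>K K'. K \<le> K' \<Longrightarrow> sum d {K..<K'} \<le> R K"
    and Rlim: "R \<longlonglongrightarrow> 0"
begin

definition aseq :: "nat \<Rightarrow> nat \<Rightarrow> real \<Rightarrow> real" where
  "aseq m K = foldr (opr d m) [0..<K] phi"

definition Pm :: "nat \<Rightarrow> real" where "Pm m = prod (\<lambda>i. 1 / d i) {..<m}"

lemma Pm_pos: "0 < Pm m"
  unfolding Pm_def using dpos by (intro prod_pos) auto

lemma prod_opr: assumes "m \<le> K"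
  shows "prod_list (map (\<lambda>i. if i < m then 1 / d i else 1) [0..<K]) = Pm m"
proof -
  let ?f = "\<lambda>i. if i < m then 1 / d i else 1"
  have "prod_list (map ?f [0..<K]) = prod ?f {0..<K}"
    by (metis prod.distinct_set_conv_list distinct_upt set_upt)
  also have "\<dots> = prod ?f {0..<m} * prod ?f {m..<K}"
    by (rule prod.atLeastLessThan_concat[symmetric]) (use assms in auto)
  also have "prod ?f {m..<K} = 1" by (rule prod.neutral) auto
  also have "prod ?f {0..<m} = Pm m" unfolding Pm_def lessThan_atLeast0 by (rule prod.cong) auto
  finally show ?thesis by simp
qed

lemma aseq_cont: "continuous_on UNIV (aseq m K)"
  unfolding aseq_def by (rule chn_cont[OF dpos phi_cont])

lemma aseq_bound: assumes "m \<le> K" shows "\<bar>aseq m K x\<bar> \<le> Pm m"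
proof -
  have "\<bar>aseq m K x - foldr (opr d m) [0..<K] (\<lambda>_. 0) x\<bar>
      \<le> 1 * prod_list (map (\<lambda>i. if i < m then 1 / d i else 1) [0..<K])"
    unfolding aseq_def by (rule chn_bound[OF dpos phi_cont]) (auto simp: phi_bound)
  then show ?thesis using prod_opr[OF assms] by (simp add: chn_zero)
qed

lemma aseq_step: assumes "m \<le> K" shows "\<bar>aseq m (Suc K) x - aseq m K x\<bar> \<le> d K * Pm m"
proof -
  have e: "aseq m (Suc K) = foldr (opr d m) [0..<K] (Tav (d K) phi)"
    unfolding aseq_def using assms by (simp add: opr_ge)
  have "\<bar>foldr (opr d m) [0..<K] (Tav (d K) phi) x - foldr (opr d m) [0..<K] phi x\<bar>
      \<le> d K * prod_list (map (\<lambda>i. if i < m then 1 / d i else 1) [0..<K])"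
    by (rule chn_bound[OF dpos Tav_cont[OF phi_cont dpos] phi_cont]) (rule Tav_phi[OF dpos])
  then show ?thesis using prod_opr[OF assms] e by (simp add: aseq_def)
qed

lemma aseq_cauchy: assumes "m \<le> K" "K \<le> K'"
  shows "\<bar>aseq m K' x - aseq m K x\<bar> \<le> Pm m * sum d {K..<K'}"
  using assms(2)
proof (induction K' rule: dec_induct)
  case base
  then show ?case by simp
next
  case (step n)
  have "\<bar>aseq m (Suc n) x - aseq m K x\<bar> \<le> \<bar>aseq m (Suc n) x - aseq m n x\<bar> + \<bar>aseq m n x - aseq m K x\<bar>"
    by linarith
  also have "\<dots> \<le> d n * Pm m + Pm m * sum d {K..<n}"
    using aseq_step[of m n x] step assms by (intro add_mono) auto
  also have "\<dots> = Pm m * sum d {K..<Suc n}" using step by (simp add: algebra_simps)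
  finally show ?case .
qed

lemma aseq_cauchyR: assumes "m \<le> K" "K \<le> K'"
  shows "\<bar>aseq m K' x - aseq m K x\<bar> \<le> Pm m * R K"
  using aseq_cauchy[OF assms, of x] dsum[OF assms(2)] Pm_pos[of m]
  by (meson mult_left_mono less_imp_le order_trans)

lemma aseq_Cauchy: "Cauchy (\<lambda>K. aseq m K x)"
proof (rule CauchyI)
  fix e :: real assume e: "0 < e"
  have "((\<lambda>K. Pm m * R K) \<longlongrightarrow> Pm m * 0) sequentially" by (intro tendsto_intros Rlim)
  then have "\<forall>\<^sub>F K in sequentially. Pm m * R K < e / 2" using e order_tendstoD(2)[of _ 0 _ "e/2"] by simp
  then obtain N where N: "\<And>K. K \<ge> N \<Longrightarrow> Pm m * R K < e / 2" by (auto simp: eventually_sequentially)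
  show "\<exists>M. \<forall>p\<ge>M. \<forall>q\<ge>M. norm (aseq m p x - aseq m q x) < e"
  proof (intro exI allI impI)
    fix p q assume p: "max m N \<le> p" and q: "max m N \<le> q"
    have "\<bar>aseq m p x - aseq m (max m N) x\<bar> \<le> Pm m * R (max m N)" using p by (intro aseq_cauchyR) auto
    moreover have "\<bar>aseq m q x - aseq m (max m N) x\<bar> \<le> Pm m * R (max m N)" using q by (intro aseq_cauchyR) auto
    moreover have "Pm m * R (max m N) < e / 2" by (rule N) auto
    ultimately show "norm (aseq m p x - aseq m q x) < e" by simp
  qed
qed

definition A :: "nat \<Rightarrow> real \<Rightarrow> real" where "A m x = lim (\<lambda>K. aseq m K x)"

lemma aseq_lim: "(\<lambda>K. aseq m K x) \<longlonglongrightarrow> A m x"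
  unfolding A_def using aseq_Cauchy convergent_LIMSEQ_iff Cauchy_convergent_iff by blast

lemma A_approx: assumes "m \<le> K" shows "\<bar>aseq m K x - A m x\<bar> \<le> Pm m * R K"
proof -
  have "(\<lambda>K'. \<bar>aseq m K' x - aseq m K x\<bar>) \<longlonglongrightarrow> \<bar>A m x - aseq m K x\<bar>"
    by (intro tendsto_intros aseq_lim)
  then have "\<bar>A m x - aseq m K x\<bar> \<le> Pm m * R K"
    by (rule LIMSEQ_le_const2) (use aseq_cauchyR assms in blast)
  then show ?thesis by simp
qed

lemma A_bound: "\<bar>A m x\<bar> \<le> Pm m"
proof -
  have "(\<lambda>K. \<bar>aseq m (K + m) x\<bar>) \<longlonglongrightarrow> \<bar>A m x\<bar>"
    by (intro tendsto_intros LIMSEQ_ignore_initial_segment aseq_lim)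
  then show ?thesis by (rule LIMSEQ_le_const2) (use aseq_bound in auto)
qed

lemma A_deriv: "(A m has_real_derivative A (Suc m) x) (at x)"
proof -
  define f where "f n = aseq m (n + Suc m)" for n
  define f' where "f' n y = (\<lambda>h. aseq (Suc m) (n + Suc m) y * h)" for n y
  define g' where "g' y = (\<lambda>h. A (Suc m) y * h)" for y
  have derf: "(f n has_derivative f' n y) (at y within UNIV)" for n y
    unfolding f_def f'_def aseq_def has_field_derivative_def[symmetric]
    by (rule chn_deriv[OF dpos phi_cont]) auto
  have nle: "\<forall>\<^sub>F n in sequentially. \<forall>y\<in>UNIV. \<forall>h. norm (f' n y h - g' y h) \<le> e * norm h"
    if e: "e > 0" for e
  proof -
    have "((\<lambda>n. Pm (Suc m) * R (n + Suc m)) \<longlongrightarrow> Pm (Suc m) * 0) sequentially"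
      by (intro tendsto_intros LIMSEQ_ignore_initial_segment Rlim)
    then have ev: "\<forall>\<^sub>F n in sequentially. Pm (Suc m) * R (n + Suc m) < e"
      using e by (auto dest: order_tendstoD)
    show ?thesis
    proof (rule eventually_mono[OF ev], intro ballI allI)
      fix n y h assume lt: "Pm (Suc m) * R (n + Suc m) < e"
      have "\<bar>aseq (Suc m) (n + Suc m) y - A (Suc m) y\<bar> \<le> e"
        using A_approx[of "Suc m" "n + Suc m" y] lt by simp
      then have "\<bar>aseq (Suc m) (n + Suc m) y - A (Suc m) y\<bar> * \<bar>h\<bar> \<le> e * \<bar>h\<bar>"
        by (rule mult_right_mono) simp
      then show "norm (f' n y h - g' y h) \<le> e * norm h"
        by (simp add: f'_def g'_def abs_mult left_diff_distrib[symmetric])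
    qed
  qed
  have lim0: "(\<lambda>n. f n 0) \<longlonglongrightarrow> A m 0"
    unfolding f_def by (intro LIMSEQ_ignore_initial_segment aseq_lim)
  obtain g where g: "\<And>y. (\<lambda>n. f n y) \<longlonglongrightarrow> g y" "\<And>y. (g has_derivative g' y) (at y within UNIV)"
    using has_derivative_sequence[OF convex_UNIV derf nle _ lim0] by blast
  have "g = A m"
  proof
    fix y
    have "(\<lambda>n. f n y) \<longlonglongrightarrow> A m y" unfolding f_def by (intro LIMSEQ_ignore_initial_segment aseq_lim)
    then show "g y = A m y" using g(1) LIMSEQ_unique by blast
  qed
  then show ?thesis using g(2)[of x] by (simp add: has_field_derivative_def g'_def)
qed

lemma A_supp: assumes "1 + R 0 < \<bar>x\<bar>" shows "A m x = 0"
proof -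
  have "aseq m K x = 0" for K
  proof -
    have "sum_list (map d [0..<K]) = sum d {0..<K}"
      by (simp add: interv_sum_list_conv_sum_set_nat)
    also have "\<dots> \<le> R 0" by (rule dsum) simp
    finally show ?thesis unfolding aseq_def
      by (intro chn_supp[OF dpos phi_supp]) (use assms in auto)
  qed
  then have "(\<lambda>K. aseq m K x) \<longlonglongrightarrow> 0" by simp
  then show ?thesis using aseq_lim LIMSEQ_unique by blast
qed

lemma A0_phi: "\<bar>phi x - A 0 x\<bar> \<le> R 0"
  using A_approx[of 0 0 x] by (simp add: aseq_def Pm_def)

lemma deriv_A: "(deriv ^^ k) (A 0) = A k"
proof (induction k)
  case 0 then show ?case by simp
next
  case (Suc k)
  have "deriv (A k) = A (Suc k)"
    by (rule ext) (rule DERIV_imp_deriv[OF A_deriv])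
  then show ?case using Suc by simp
qed

lemma smooth_A: "smooth_real (A 0)"
  unfolding smooth_real_def deriv_A using A_deriv real_differentiable_def by blast

end



definition ell :: "real \<Rightarrow> nat \<Rightarrow> real" where
  "ell \<epsilon> i = ln (real i + exp 1) powr (- \<epsilon>)"
definition dl :: "real \<Rightarrow> nat \<Rightarrow> real" where
  "dl \<epsilon> i = (ell \<epsilon> i - ell \<epsilon> (Suc i)) / 2"

lemma e_gt1: "1 < real i + exp (1::real)"
proof -
  have "1 < exp (1::real)" by (rule exp_gt_one) simp
  then show ?thesis using of_nat_0_le_iff[of i] by linarith
qed

lemma ln_ge1: "1 \<le> ln (real i + exp 1)"
proof -
  have "ln (exp 1) \<le> ln (real i + exp 1)" using e_gt1[of i] by (subst ln_le_cancel_iff) auto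
  then show ?thesis by simp
qed

lemma ell_nonneg: "0 \<le> ell \<epsilon> i" by (simp add: ell_def)

lemma dl_lower:
  assumes e: "0 < \<epsilon>"
  shows "\<epsilon> / (2 * ((real i + 1 + exp 1) * ln (real i + 1 + exp 1) powr (1 + \<epsilon>))) \<le> dl \<epsilon> i"
proof -
  define f where "f y = ln y powr (- \<epsilon>)" for y :: real
  define f' where "f' y = - \<epsilon> * ln y powr (- \<epsilon> - 1) * (1 / y)" for y :: real
  let ?a = "real i + exp 1" and ?b = "real i + 1 + exp 1"
  have a1: "1 < ?a" by (rule e_gt1)
  have der: "(f has_real_derivative f' y) (at y)" if "?a \<le> y" for y
  proof -
    have y1: "1 < y" using a1 that by simp
    have "(ln has_real_derivative 1 / y) (at y)" using y1 by (auto intro!: derivative_eq_intros)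
    moreover have "0 < ln y" using y1 by simp
    ultimately show ?thesis
      unfolding f_def f'_def using DERIV_fun_powr[of ln "1/y" y "- \<epsilon>"] by simp
  qed
  obtain z where z: "?a < z" "z < ?b" "f ?b - f ?a = (?b - ?a) * f' z"
    using MVT2[of ?a ?b f f'] der by auto
  have z1: "1 < z" using a1 z by simp
  have lnz: "0 < ln z" "ln z \<le> ln ?b" using z1 z by auto
  have "ln ?b powr (- \<epsilon> - 1) \<le> ln z powr (- \<epsilon> - 1)"
    by (rule powr_mono2') (use e lnz in auto)
  moreover have "1 / ?b \<le> 1 / z" using z z1 by (intro divide_left_mono) auto
  ultimately have "ln ?b powr (- \<epsilon> - 1) * (1 / ?b) \<le> ln z powr (- \<epsilon> - 1) * (1 / z)"
    by (intro mult_mono) auto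
  then have "\<epsilon> * (ln ?b powr (- \<epsilon> - 1) * (1 / ?b)) \<le> \<epsilon> * (ln z powr (- \<epsilon> - 1) * (1 / z))"
    using e by (intro mult_left_mono) auto
  also have "\<dots> = f ?a - f ?b" using z(3) by (simp add: f'_def)
  also have "\<dots> = 2 * dl \<epsilon> i" by (simp add: dl_def ell_def f_def add.commute add.left_commute)
  finally have *: "\<epsilon> * (ln ?b powr (- \<epsilon> - 1) * (1 / ?b)) \<le> 2 * dl \<epsilon> i" .
  have lb: "0 < ln ?b" using a1 by simp
  have "ln ?b powr (- \<epsilon> - 1) = 1 / ln ?b powr (1 + \<epsilon>)"
  proof -
    have "ln ?b powr (- \<epsilon> - 1) = ln ?b powr (- (1 + \<epsilon>))"
      by (rule arg_cong[where f="\<lambda>t. ln ?b powr t"]) simp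
    also have "\<dots> = 1 / ln ?b powr (1 + \<epsilon>)" by (simp only: powr_minus inverse_eq_divide)
    finally show ?thesis .
  qed
  then have "\<epsilon> * (ln ?b powr (- \<epsilon> - 1) * (1 / ?b)) = \<epsilon> / ((?b * ln ?b powr (1 + \<epsilon>)))"
    by simp
  then have **: "\<epsilon> / (?b * ln ?b powr (1 + \<epsilon>)) \<le> 2 * dl \<epsilon> i" using * by simp
  have "\<epsilon> / (2 * (?b * ln ?b powr (1 + \<epsilon>))) = (\<epsilon> / (?b * ln ?b powr (1 + \<epsilon>))) / 2" by simp
  moreover have "\<And>x y::real. x \<le> 2 * y \<Longrightarrow> x / 2 \<le> y" by simp
  ultimately show ?thesis using ** by metis
qed

lemma dl_pos: assumes "0 < \<epsilon>" shows "0 < dl \<epsilon> i"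
proof -
  have "0 < \<epsilon> / (2 * ((real i + 1 + exp 1) * ln (real i + 1 + exp 1) powr (1 + \<epsilon>)))"
    using assms ln_ge1[of "Suc i"] e_gt1[of "Suc i"] by (intro divide_pos_pos mult_pos_pos) (auto simp: add.commute add.left_commute)
  then show ?thesis using dl_lower[OF assms, of i] by linarith
qed

lemma dl_sum: "K \<le> K' \<Longrightarrow> sum (dl \<epsilon>) {K..<K'} = (ell \<epsilon> K - ell \<epsilon> K') / 2"
proof (induction K' rule: dec_induct)
  case base then show ?case by simp
next
  case (step n) then show ?case by (simp add: dl_def diff_divide_distrib)
qed

lemma ell_lim: assumes "0 < \<epsilon>" shows "(\<lambda>K. ell \<epsilon> K / 2) \<longlonglongrightarrow> 0"
proof -
  have "filterlim (\<lambda>K::nat. exp 1 + real K) at_top sequentially"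
    by (rule filterlim_tendsto_add_at_top[OF tendsto_const filterlim_real_sequentially])
  then have "filterlim (\<lambda>K::nat. ln (real K + exp 1)) at_top sequentially"
    using filterlim_compose[OF ln_at_top] by (simp add: add.commute)
  then have "(\<lambda>K. ln (real K + exp 1) powr (- \<epsilon>)) \<longlonglongrightarrow> 0"
    by (rule tendsto_neg_powr[rotated]) (use assms in simp)
  then show ?thesis unfolding ell_def by (intro tendsto_divide_zero)
qed

lemma bumpseq_dl: assumes "0 < \<epsilon>" shows "bumpseq (dl \<epsilon>) (\<lambda>K. ell \<epsilon> K / 2)"
proof
  show "\<And>i. 0 < dl \<epsilon> i" by (rule dl_pos[OF assms])
  show "\<And>K K'. K \<le> K' \<Longrightarrow> sum (dl \<epsilon>) {K..<K'} \<le> ell \<epsilon> K / 2"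
    using dl_sum ell_nonneg by (simp add: divide_right_mono)
  show "(\<lambda>K. ell \<epsilon> K / 2) \<longlonglongrightarrow> 0" by (rule ell_lim[OF assms])
qed

lemma ell0: "ell \<epsilon> 0 = 1" by (simp add: ell_def)



definition Sm :: "real \<Rightarrow> (int \<Rightarrow> complex) \<Rightarrow> complex" where
  "Sm \<theta> b = (\<Sum>\<^sub>\<infinity>j\<in>(UNIV::int set). b j * cis (real_of_int j * \<theta>))"

lemma Lpoly_Sm: "Lpoly a n \<theta> = Sm \<theta> (\<lambda>j. complex_of_real (a (real_of_int j / real n)))"
  by (simp add: Lpoly_def Sm_def)

lemma Sm_fin:
  assumes "finite I" "\<And>j. j \<notin> I \<Longrightarrow> b j = 0"
  shows "Sm \<theta> b = (\<Sum>j\<in>I. b j * cis (real_of_int j * \<theta>))"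
proof -
  have "Sm \<theta> b = (\<Sum>\<^sub>\<infinity>j\<in>I. b j * cis (real_of_int j * \<theta>))"
    unfolding Sm_def by (rule infsum_cong_neutral) (use assms in auto)
  also have "\<dots> = (\<Sum>j\<in>I. b j * cis (real_of_int j * \<theta>))" by (rule infsum_finite[OF assms(1)])
  finally show ?thesis .
qed

lemma Sm_shift: "Sm \<theta> (\<lambda>j. b (j - 1)) = cis \<theta> * Sm \<theta> b"
proof -
  have bij: "bij_betw (\<lambda>i::int. i + 1) UNIV UNIV" by (rule bij_betwI[where g="\<lambda>i. i - 1"]) auto
  have "Sm \<theta> (\<lambda>j. b (j - 1)) = (\<Sum>\<^sub>\<infinity>i\<in>(UNIV::int set). b (i + 1 - 1) * cis (real_of_int (i + 1) * \<theta>))"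
    unfolding Sm_def by (rule infsum_reindex_bij_betw[OF bij, symmetric])
  also have "\<dots> = (\<Sum>\<^sub>\<infinity>i\<in>(UNIV::int set). cis \<theta> * (b i * cis (real_of_int i * \<theta>)))"
    by (rule infsum_cong) (simp add: distrib_right cis_mult[symmetric] algebra_simps)
  also have "\<dots> = cis \<theta> * Sm \<theta> b" unfolding Sm_def by (rule infsum_cmult_right')
  finally show ?thesis .
qed

definition nb :: "(int \<Rightarrow> complex) \<Rightarrow> int \<Rightarrow> complex" where
  "nb b j = b j - b (j - 1)"

lemma nb_apply: "nb b j = b j - b (j - 1)" by (simp add: nb_def)

lemma nb_Suc: "(nb ^^ Suc k) b j = (nb^^k) b j - (nb^^k) b (j-1)"
  apply (simp only: funpow.simps(2) o_apply)
  apply (rule nb_apply)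
  done

lemma Sm_nb:
  assumes supp: "\<And>j. j \<notin> {lo..hi} \<Longrightarrow> b j = 0"
  shows "Sm \<theta> (nb b) = (1 - cis \<theta>) * Sm \<theta> b"
proof -
  let ?J = "{lo..hi+1}"
  have s1: "Sm \<theta> (nb b) = (\<Sum>j\<in>?J. nb b j * cis (real_of_int j * \<theta>))"
    by (rule Sm_fin) (use supp in \<open>auto simp: nb_apply\<close>)
  have s2: "Sm \<theta> b = (\<Sum>j\<in>?J. b j * cis (real_of_int j * \<theta>))"
    by (rule Sm_fin) (use supp in auto)
  have s3: "Sm \<theta> (\<lambda>j. b (j - 1)) = (\<Sum>j\<in>?J. b (j - 1) * cis (real_of_int j * \<theta>))"
    by (rule Sm_fin) (use supp in auto)
  have "Sm \<theta> (nb b) = Sm \<theta> b - Sm \<theta> (\<lambda>j. b (j - 1))"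
    unfolding s1 s2 s3 nb_apply by (simp add: left_diff_distrib sum_subtractf)
  then show ?thesis by (simp add: Sm_shift algebra_simps)
qed

lemma nb_supp:
  assumes "\<And>j. j \<notin> {lo..hi} \<Longrightarrow> b j = 0"
  shows "j \<notin> {lo..hi + int k} \<Longrightarrow> (nb ^^ k) b j = 0"
proof (induction k arbitrary: j)
  case 0 then show ?case using assms by simp
next
  case (Suc k)
  have a: "(nb ^^ k) b j = 0" using Suc.prems by (intro Suc.IH) auto
  have b: "(nb ^^ k) b (j - 1) = 0" using Suc.prems by (intro Suc.IH) auto
  show ?case unfolding nb_Suc using a b by simp
qed

lemma Sm_nb_iter:
  assumes supp: "\<And>j. j \<notin> {lo..hi} \<Longrightarrow> b j = 0"
  shows "Sm \<theta> ((nb ^^ k) b) = (1 - cis \<theta>) ^ k * Sm \<theta> b"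
proof (induction k)
  case 0 then show ?case by simp
next
  case (Suc k)
  have "Sm \<theta> (nb ((nb ^^ k) b)) = (1 - cis \<theta>) * Sm \<theta> ((nb ^^ k) b)"
    by (rule Sm_nb[where lo=lo and hi="hi + int k"]) (rule nb_supp[OF supp])
  then have "Sm \<theta> ((nb ^^ Suc k) b) = (1 - cis \<theta>) * Sm \<theta> ((nb ^^ k) b)"
    by simp
  then show ?case using Suc by simp
qed

lemma Sm_bound:
  assumes supp: "\<And>j. j \<notin> {lo..hi} \<Longrightarrow> b j = 0" and M: "\<And>j. norm (b j) \<le> M"
  shows "norm (Sm \<theta> b) \<le> real (nat (hi - lo + 1)) * M"
proof -
  have "norm (Sm \<theta> b) = norm (\<Sum>j\<in>{lo..hi}. b j * cis (real_of_int j * \<theta>))"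
    using Sm_fin[of "{lo..hi}" b \<theta>] supp by simp
  also have "\<dots> \<le> (\<Sum>j\<in>{lo..hi}. norm (b j * cis (real_of_int j * \<theta>)))" by (rule norm_sum)
  also have "\<dots> \<le> of_nat (card {lo..hi}) * M"
    by (rule sum_bounded_above) (simp add: norm_mult M)
  finally show ?thesis by simp
qed

definition rb :: "real \<Rightarrow> (real \<Rightarrow> real) \<Rightarrow> real \<Rightarrow> real" where
  "rb h g x = g x - g (x - h)"

lemma rb_apply: "rb h g x = g x - g (x - h)" by (simp add: rb_def)

lemma rb_Suc: "(rb h ^^ Suc k) g x = (rb h ^^ k) g x - (rb h ^^ k) g (x - h)"
  apply (simp only: funpow.simps(2) o_apply)
  apply (rule rb_apply)
  done

lemma nb_rb:
  assumes "0 < n"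
  shows "(nb ^^ k) (\<lambda>j. complex_of_real (g (real_of_int j / real n)))
       = (\<lambda>j. complex_of_real ((rb (1 / real n) ^^ k) g (real_of_int j / real n)))"
proof (induction k)
  case 0 then show ?case by simp
next
  case (Suc k)
  have e: "real_of_int (j - 1) / real n = real_of_int j / real n - 1 / real n" for j
    by (simp add: diff_divide_distrib)
  show ?case
  proof (rule ext)
    fix j
    show "(nb ^^ Suc k) (\<lambda>j. complex_of_real (g (real_of_int j / real n))) j =
      complex_of_real ((rb (1 / real n) ^^ Suc k) g (real_of_int j / real n))"
      unfolding nb_Suc rb_Suc Suc e[of j] by simp
  qed
qed

lemma rb_deriv:
  assumes "\<And>y. (g has_real_derivative g' y) (at y)"
  shows "(rb h g has_real_derivative rb h g' x) (at x)"
proof -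
  have s2: "((\<lambda>y. y - h) has_real_derivative 1) (at x)" by (rule derivative_eq_intros refl)+ simp
  have d2: "((\<lambda>y. g (y - h)) has_real_derivative g' (x-h)) (at x)"
    using DERIV_chain2[OF assms s2] by (simp only: mult_1_right)
  show ?thesis unfolding rb_def[abs_def] using DERIV_diff[OF assms d2] by simp
qed

lemma rb_supp:
  assumes "\<And>y. r < \<bar>y\<bar> \<Longrightarrow> g y = 0" "0 < h"
  shows "y < - r \<or> r + real k * h < y \<Longrightarrow> (rb h ^^ k) g y = 0"
proof (induction k arbitrary: y)
  case 0 then show ?case using assms by auto
next
  case (Suc k)
  have a: "(rb h ^^ k) g y = 0" using Suc.prems assms(2) by (intro Suc.IH) (auto simp: algebra_simps)
  have b: "(rb h ^^ k) g (y - h) = 0" using Suc.prems assms(2) by (intro Suc.IH) (auto simp: algebra_simps)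
  show ?case unfolding rb_Suc using a b by simp
qed

lemma cis_lower:
  assumes "\<bar>\<theta>\<bar> \<le> pi"
  shows "\<bar>\<theta>\<bar> / 3 \<le> cmod (1 - cis \<theta>)"
proof -
  define x where "x = \<theta> / 2"
  have x: "\<bar>x\<bar> \<le> pi / 2" using assms by (simp add: x_def)
  have sb: "\<bar>sin x - x\<bar> \<le> \<bar>x\<bar> ^ 3 / 6"
  proof -
    have "\<bar>sin x - (\<Sum>m<3. sin_coeff m * x ^ m)\<bar> \<le> inverse (fact 3) * \<bar>x\<bar> ^ 3"
      by (rule Maclaurin_sin_bound)
    moreover have "(\<Sum>m<3. sin_coeff m * x ^ m) = x"
      by (simp add: eval_nat_numeral sin_coeff_def)
    moreover have "inverse (fact 3) = (1/6::real)"
      by (simp add: eval_nat_numeral)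
    ultimately show ?thesis by simp
  qed
  have x2: "\<bar>x\<bar> ^ 2 \<le> 4"
  proof -
    have "\<bar>x\<bar> \<le> 2" using x pi_half_less_two by linarith
    then have "\<bar>x\<bar> ^ 2 \<le> 2 ^ 2" by (rule power_mono) simp
    then show ?thesis by simp
  qed
  have "\<bar>x\<bar> ^ 3 / 6 \<le> 2 * \<bar>x\<bar> / 3"
  proof -
    have "\<bar>x\<bar> ^ 3 = \<bar>x\<bar> * \<bar>x\<bar> ^ 2" by (simp add: power3_eq_cube power2_eq_square)
    also have "\<dots> \<le> \<bar>x\<bar> * 4" by (rule mult_left_mono[OF x2]) simp
    finally show ?thesis by simp
  qed
  with sb have sx: "\<bar>x\<bar> / 3 \<le> \<bar>sin x\<bar>" by linarith
  have "(cmod (1 - cis \<theta>))\<^sup>2 = (1 - cos \<theta>)\<^sup>2 + (sin \<theta>)\<^sup>2"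
    by (simp add: cmod_def cis.code)
  also have "\<dots> = 2 - 2 * cos \<theta>" by (simp add: power2_eq_square algebra_simps sin_squared_eq)
  also have "\<dots> = (2 * \<bar>sin x\<bar>)\<^sup>2"
    using cos_double_sin[of x] by (simp add: x_def power2_eq_square)
  finally have "cmod (1 - cis \<theta>) = 2 * \<bar>sin x\<bar>"
    by (rule power2_eq_imp_eq) auto
  then show ?thesis using sx by (simp add: x_def)
qed



context bumpseq begin

lemma rb_Suc_fun: "(rb h ^^ Suc k) G = rb h ((rb h ^^ k) G)" by simp

lemma rbA_deriv: "((rb h ^^ k) (A m) has_real_derivative (rb h ^^ k) (A (Suc m)) x) (at x)"
proof (induction k arbitrary: m x)
  case 0 then show ?case using A_deriv by simp
next
  case (Suc k)
  show ?case unfolding rb_Suc_fun by (rule rb_deriv[OF Suc.IH])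
qed

lemma rbA_bound: assumes h: "0 < h" shows "\<bar>(rb h ^^ k) (A m) x\<bar> \<le> h ^ k * Pm (m + k)"
proof (induction k arbitrary: m x)
  case 0 then show ?case using A_bound by simp
next
  case (Suc k)
  obtain z where z: "x - h < z" "z < x"
    "(rb h ^^ k) (A m) x - (rb h ^^ k) (A m) (x - h) = (x - (x - h)) * (rb h ^^ k) (A (Suc m)) z"
    using MVT2[of "x - h" x "(rb h ^^ k) (A m)" "(rb h ^^ k) (A (Suc m))"] rbA_deriv h by auto
  have "\<bar>(rb h ^^ Suc k) (A m) x\<bar> = h * \<bar>(rb h ^^ k) (A (Suc m)) z\<bar>"
    unfolding rb_Suc z(3) using h by (simp add: abs_mult)
  also have "\<dots> \<le> h * (h ^ k * Pm (Suc m + k))"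
    by (rule mult_left_mono[OF Suc.IH]) (use h in simp)
  finally show ?case by simp
qed

lemma main_est:
  assumes R0: "R 0 \<le> 1/2" and n: "1 \<le> n"
  shows "cmod ((1 - cis \<theta>) ^ k * Lpoly (A 0) n \<theta>) \<le> real (4 * n + k + 1) * (1 / real n) ^ k * Pm k"
proof -
  define b where "b j = complex_of_real (A 0 (real_of_int j / real n))" for j
  have np: "0 < real n" using n by simp
  have supp: "b j = 0" if "j \<notin> {- 2 * int n..2 * int n}" for j
  proof -
    have "2 * real n < \<bar>real_of_int j\<bar>" using that by auto
    then have "2 < \<bar>real_of_int j / real n\<bar>" using np by (simp add: abs_divide less_divide_eq)
    then have "A 0 (real_of_int j / real n) = 0" using R0 by (intro A_supp) simp
    then show ?thesis unfolding b_def by simp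
  qed
  have "Lpoly (A 0) n \<theta> = Sm \<theta> b" unfolding Lpoly_Sm b_def ..
  then have "(1 - cis \<theta>) ^ k * Lpoly (A 0) n \<theta> = Sm \<theta> ((nb ^^ k) b)"
    using Sm_nb_iter[OF supp] by simp
  also have "(nb ^^ k) b = (\<lambda>j. complex_of_real ((rb (1 / real n) ^^ k) (A 0) (real_of_int j / real n)))"
    unfolding b_def by (rule nb_rb) (use n in simp)
  finally have eq: "(1 - cis \<theta>) ^ k * Lpoly (A 0) n \<theta> = Sm \<theta> (\<lambda>j. complex_of_real ((rb (1 / real n) ^^ k) (A 0) (real_of_int j / real n)))" .
  have "cmod (Sm \<theta> ((nb ^^ k) b)) \<le> real (nat (2 * int n + int k - (- 2 * int n) + 1)) * ((1 / real n) ^ k * Pm (0 + k))"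
  proof (rule Sm_bound)
    show "\<And>j. j \<notin> {- 2 * int n..2 * int n + int k} \<Longrightarrow> (nb ^^ k) b j = 0"
      by (rule nb_supp[OF supp])
    fix j
    show "cmod ((nb ^^ k) b j) \<le> (1 / real n) ^ k * Pm (0 + k)"
      unfolding \<open>(nb ^^ k) b = _\<close> using rbA_bound[of "1 / real n" k 0] np by simp
  qed
  moreover have "nat (2 * int n + int k - (- 2 * int n) + 1) = 4 * n + k + 1" by simp
  ultimately show ?thesis
    using \<open>(1 - cis \<theta>) ^ k * Lpoly (A 0) n \<theta> = Sm \<theta> ((nb ^^ k) b)\<close> by (simp add: mult.assoc add.commute)
qed

end



lemma exp_e_le: "exp (exp 1) \<le> (27::real)"
proof -
  have "exp (exp 1) \<le> exp (3::real)" using exp_le by simp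
  also have "exp (3::real) = exp 1 ^ 3" using exp_of_nat_mult[of 3 1] by simp
  also have "\<dots> \<le> 3 ^ 3" by (rule power_mono[OF exp_le]) simp
  finally show ?thesis by simp
qed

lemma final_numeric:
  fixes Ln \<theta> \<epsilon> :: real and n :: nat and Pk :: "nat \<Rightarrow> real"
  assumes n: "1 \<le> n" and th: "\<bar>\<theta>\<bar> \<le> pi" and e0: "0 < \<epsilon>" and e1: "\<epsilon> \<le> 1"
    and Ln0: "0 \<le> Ln"
    and H: "\<And>k. Ln * (\<bar>\<theta>\<bar> / 3) ^ k \<le> real (4 * n + k + 1) * (1 / real n) ^ k * Pk k"
    and P: "\<And>k. Pk k \<le> (2 * (real k + exp 1) * ln (real k + exp 1) powr (1 + \<epsilon>) / \<epsilon>) ^ k"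
  shows "Ln \<le> 200 * real n * exp (- (1 / (12 * exp 1) * \<epsilon> * real n * \<bar>\<theta>\<bar>) /
               (ln (exp 1 + real n * \<bar>\<theta>\<bar>)) powr (1 + \<epsilon>))"
proof -
  define t where "t = real n * \<bar>\<theta>\<bar>"
  define Q where "Q = ln (exp 1 + t) powr (1 + \<epsilon>)"
  define x where "x = \<epsilon> * t / (12 * exp 1 * Q)"
  have np: "1 \<le> real n" using n by simp
  have t0: "0 \<le> t" unfolding t_def by simp
  have epos: "0 < exp (1::real)" by simp
  have e3: "exp (1::real) \<le> 3" by (rule exp_le)
  have e1': "1 \<le> exp (1::real)" by simp
  have lnge: "1 \<le> ln (exp 1 + t)"
  proof -
    have "ln (exp 1) \<le> ln (exp 1 + t)" using t0 epos by (subst ln_le_cancel_iff) linarith+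
    then show ?thesis by simp
  qed
  have Q1: "1 \<le> Q" unfolding Q_def by (rule ge_one_powr_ge_zero[OF lnge]) (use e0 in simp)
  have x0: "0 \<le> x" unfolding x_def using e0 t0 Q1 by simp
  have RHS: "200 * real n * exp (- (1 / (12 * exp 1) * \<epsilon> * real n * \<bar>\<theta>\<bar>) /
               (ln (exp 1 + real n * \<bar>\<theta>\<bar>)) powr (1 + \<epsilon>)) = 200 * real n * exp (- x)"
    unfolding x_def Q_def t_def by (simp add: field_simps)
  have H0: "Ln \<le> real (4 * n + 1)"
  proof -
    have a: "Ln \<le> (1 + 4 * real n) * Pk 0" "Pk 0 \<le> 1" using H[of 0] P[of 0] by simp_all
    have c0: "0 \<le> 1 + 4 * real n" by simp
    have c: "(1 + 4 * real n) * Pk 0 \<le> 1 + 4 * real n"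
      using mult_left_mono[OF a(2) c0] by (simp only: mult_1_right)
    have "real (4 * n + 1) = 1 + 4 * real n" by simp
    then show ?thesis using a(1) c by linarith
  qed
  have main: "Ln \<le> 200 * real n * exp (- x)"
  proof (cases "\<epsilon> * t < 12 * exp 1 ^ 2 * Q")
    case True
    have "x \<le> exp 1"
    proof -
      have "x * (12 * exp 1 * Q) = \<epsilon> * t" unfolding x_def using Q1 by simp
      also have "\<dots> \<le> exp 1 * (12 * exp 1 * Q)" using True by (simp add: power2_eq_square)
      finally show ?thesis using Q1 by (simp add: mult_le_cancel_right)
    qed
    then have "exp (- exp 1) \<le> exp (- x)" by simp
    moreover have "1 / 27 \<le> exp (- exp 1::real)"
      using exp_e_le by (simp add: exp_minus inverse_eq_divide divide_le_eq_1 field_simps)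
    ultimately have ex: "1 / 27 \<le> exp (- x)" by linarith
    have "Ln \<le> 5 * real n" using H0 np by simp
    also have "\<dots> \<le> 200 * real n * (1/27)" using np by simp
    also have "\<dots> \<le> 200 * real n * exp (- x)" by (rule mult_left_mono[OF ex]) simp
    finally show ?thesis .
  next
    case False
    then have big: "12 * exp 1 ^ 2 * Q \<le> \<epsilon> * t" by simp
    have "0 < 12 * exp 1 ^ 2 * Q" using Q1 by simp
    then have "0 < \<epsilon> * t" using big by linarith
    then have tpos: "0 < t" using e0 by (simp add: zero_less_mult_iff)
    have thpos: "0 < \<bar>\<theta>\<bar>" using tpos unfolding t_def by (auto simp: zero_less_mult_iff)
    define k where "k = nat \<lfloor>x\<rfloor>"
    have kx: "real k \<le> x" unfolding k_def using x0 by linarith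
    have xk: "x < real k + 1" unfolding k_def using x0 by linarith
    have xt: "x \<le> t"
    proof -
      have "x * (12 * exp 1 * Q) = \<epsilon> * t" unfolding x_def using Q1 by simp
      also have "\<dots> \<le> t * (12 * exp 1 * Q)"
      proof -
        have "\<epsilon> * t \<le> 1 * t" by (rule mult_right_mono[OF e1 t0])
        moreover have "1 * 1 \<le> exp 1 * Q" by (rule mult_mono[OF e1' Q1]) (use epos in auto)
        then have "1 \<le> 12 * exp 1 * Q" by linarith
        then have "t * 1 \<le> t * (12 * exp 1 * Q)" by (rule mult_left_mono[OF _ t0])
        ultimately show ?thesis by linarith
      qed
      finally show ?thesis using Q1 by (simp add: mult_le_cancel_right)
    qed
    have tn: "t \<le> 4 * real n"
    proof -
      have "t \<le> real n * pi" unfolding t_def by (rule mult_left_mono[OF th]) simp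
      also have "\<dots> \<le> real n * 4" by (rule mult_left_mono) (use pi_less_4 in auto)
      finally show ?thesis by simp
    qed
    have cnt: "real (4 * n + k + 1) \<le> 9 * real n" using kx xt tn np by simp
    define Qk where "Qk = ln (real k + exp 1) powr (1 + \<epsilon>)"
    have Qk: "Qk \<le> Q"
    proof -
      have "ln (real k + exp 1) \<le> ln (exp 1 + t)" using kx xt epos of_nat_0_le_iff[of k] by (subst ln_le_cancel_iff) linarith+
      moreover have "0 \<le> ln (real k + exp 1)" by (rule ln_ge_zero) (use e1' of_nat_0_le_iff[of k] in linarith)
      ultimately show ?thesis unfolding Qk_def Q_def by (intro powr_mono2) (use e0 in auto)
    qed
    have Qk0: "0 \<le> Qk" unfolding Qk_def by simp
    define B where "B = 6 * (real k + exp 1) * Qk / (\<epsilon> * t)"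
    have B0: "0 \<le> B" unfolding B_def using e0 tpos Qk0 by simp
    have Ble: "B \<le> exp (-1)"
    proof -
      have "6 * (real k + exp 1) * Qk \<le> 6 * (x + exp 1) * Q"
        using kx Qk Qk0 x0 by (intro mult_mono) auto
      also have "\<dots> = 6 * x * Q + 6 * exp 1 * Q" by (simp add: algebra_simps)
      also have "6 * x * Q = \<epsilon> * t / (2 * exp 1)" unfolding x_def using Q1 by simp
      also have "6 * exp 1 * Q \<le> \<epsilon> * t / (2 * exp 1)"
        using big by (simp add: field_simps power2_eq_square)
      finally have "6 * (real k + exp 1) * Qk \<le> \<epsilon> * t / exp 1" by simp
      then have "B \<le> (\<epsilon> * t / exp 1) / (\<epsilon> * t)"
        unfolding B_def by (rule divide_right_mono) (use e0 tpos in simp)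
      also have "\<dots> = 1 / exp 1" using e0 tpos by simp
      also have "\<dots> = exp (-1)" by (simp add: exp_minus inverse_eq_divide)
      finally show ?thesis .
    qed
    have H1: "Ln * (\<bar>\<theta>\<bar> / 3) ^ k \<le> real (4 * n + k + 1) * (1 / real n) ^ k *
            (2 * (real k + exp 1) * Qk / \<epsilon>) ^ k"
    proof -
      have "real (4 * n + k + 1) * (1 / real n) ^ k * Pk k \<le> real (4 * n + k + 1) * (1 / real n) ^ k *
            (2 * (real k + exp 1) * Qk / \<epsilon>) ^ k"
        by (rule mult_left_mono[OF P[of k, folded Qk_def]]) simp
      then show ?thesis using H[of k] by linarith
    qed
    have E: "(1 / real n) ^ k * (2 * (real k + exp 1) * Qk / \<epsilon>) ^ k = B ^ k * (\<bar>\<theta>\<bar> / 3) ^ k"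
    proof -
      have base: "(1 / real n) * (2 * (real k + exp 1) * Qk / \<epsilon>) = B * (\<bar>\<theta>\<bar> / 3)"
        unfolding B_def t_def using np e0 thpos by (simp add: field_simps)
      show ?thesis by (simp only: power_mult_distrib[symmetric] base)
    qed
    have "Ln * (\<bar>\<theta>\<bar> / 3) ^ k \<le> (real (4 * n + k + 1) * B ^ k) * (\<bar>\<theta>\<bar> / 3) ^ k"
    proof -
      have "real (4 * n + k + 1) * (1 / real n) ^ k * (2 * (real k + exp 1) * Qk / \<epsilon>) ^ k
          = (real (4 * n + k + 1) * B ^ k) * (\<bar>\<theta>\<bar> / 3) ^ k"
        by (metis E mult.assoc)
      then show ?thesis using H1 by linarith
    qed
    then have L1: "Ln \<le> real (4 * n + k + 1) * B ^ k"
      using thpos by (simp add: mult_le_cancel_right)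
    have "B ^ k \<le> exp (-1) ^ k" by (rule power_mono[OF Ble B0])
    also have "\<dots> = exp (- real k)" using exp_of_nat_mult[of k "-1::real"] by simp
    also have "\<dots> \<le> exp (1 - x)" using xk by simp
    also have "\<dots> = exp 1 * exp (- x)" by (simp add: exp_diff exp_minus field_simps)
    finally have Bk: "B ^ k \<le> exp 1 * exp (- x)" .
    have "Ln \<le> 9 * real n * (exp 1 * exp (- x))"
    proof -
      have "real (4 * n + k + 1) * B ^ k \<le> 9 * real n * (exp 1 * exp (- x))"
        by (rule mult_mono[OF cnt Bk]) (use B0 in auto)
      then show ?thesis using L1 by linarith
    qed
    also have "\<dots> \<le> 200 * real n * exp (- x)" using e3 np by simp
    finally show ?thesis .
  qed
  then show ?thesis unfolding RHS .
qed



lemma Pm_bound: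
  assumes e: "0 < \<epsilon>"
  shows "bumpseq.Pm (dl \<epsilon>) k \<le> (2 * (real k + exp 1) * ln (real k + exp 1) powr (1 + \<epsilon>) / \<epsilon>) ^ k"
proof -
  interpret B: bumpseq "dl \<epsilon>" "\<lambda>K. ell \<epsilon> K / 2" by (rule bumpseq_dl[OF e])
  define C where "C = 2 * (real k + exp 1) * ln (real k + exp 1) powr (1 + \<epsilon>) / \<epsilon>"
  have "B.Pm k = (\<Prod>i<k. 1 / dl \<epsilon> i)" by (simp add: B.Pm_def)
  also have "\<dots> \<le> (\<Prod>i<k. C)"
  proof (rule prod_mono, intro conjI)
    fix i assume i: "i \<in> {..<k}"
    have dp: "0 < dl \<epsilon> i" by (rule dl_pos[OF e])
    then show "0 \<le> 1 / dl \<epsilon> i" by simp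
    define X where "X = (real i + 1 + exp 1) * ln (real i + 1 + exp 1) powr (1 + \<epsilon>)"
    have g1: "1 < real i + 1 + exp 1" using e_gt1[of "Suc i"] by (simp add: add.commute add.left_commute)
    have Xp: "0 < X" unfolding X_def using g1 by (intro mult_pos_pos) auto
    have lo: "\<epsilon> / (2 * X) \<le> dl \<epsilon> i" unfolding X_def by (rule dl_lower[OF e])
    have "1 / dl \<epsilon> i \<le> 1 / (\<epsilon> / (2 * X))"
      by (rule divide_left_mono[OF lo]) (use e Xp dp in auto)
    also have "\<dots> = 2 * X / \<epsilon>" by simp
    also have "\<dots> \<le> C"
    proof -
      have ik: "real i + 1 + exp 1 \<le> real k + exp 1" using i by simp
      have "ln (real i + 1 + exp 1) \<le> ln (real k + exp 1)" using ik g1 by (subst ln_le_cancel_iff) auto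
      moreover have "0 \<le> ln (real i + 1 + exp 1)" using g1 by simp
      ultimately have "ln (real i + 1 + exp 1) powr (1 + \<epsilon>) \<le> ln (real k + exp 1) powr (1 + \<epsilon>)"
        by (intro powr_mono2) (use e in auto)
      then have "X \<le> (real k + exp 1) * ln (real k + exp 1) powr (1 + \<epsilon>)"
        unfolding X_def using ik g1 by (intro mult_mono) auto
      then have "2 * X / \<epsilon> \<le> 2 * ((real k + exp 1) * ln (real k + exp 1) powr (1 + \<epsilon>)) / \<epsilon>"
        using e by (intro divide_right_mono) auto
      then show ?thesis unfolding C_def by (simp only: mult.assoc)
    qed
    finally show "1 / dl \<epsilon> i \<le> C" .
  qed
  also have "\<dots> = C ^ k" by simp
  finally show ?thesis unfolding C_def .
qed

theorem theorem2p2: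
  shows "\<exists>c'>0. \<forall>\<epsilon>::real. 0 < \<epsilon> \<and> \<epsilon> \<le> 1 \<longrightarrow>
    (\<exists>c>0. \<exists>a::real \<Rightarrow> real.
       smooth_real a \<and> (\<exists>x. a x \<noteq> 0) \<and> closure {x. a x \<noteq> 0} \<subseteq> {-2..2} \<and>
       (\<forall>n::nat. n \<ge> 1 \<longrightarrow> (\<forall>\<theta>\<in>{-pi..pi}.
          norm (Lpoly a n \<theta>) \<le>
            c * real n * exp (- (c' * \<epsilon> * real n * \<bar>\<theta>\<bar>) /
               (ln (exp 1 + real n * \<bar>\<theta>\<bar>)) powr (1 + \<epsilon>)))))"
proof (rule exI[of _ "1 / (12 * exp 1)"], rule conjI, simp, intro allI impI)
  fix \<epsilon> :: real assume "0 < \<epsilon> \<and> \<epsilon> \<le> 1"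
  then have e0: "0 < \<epsilon>" and e1: "\<epsilon> \<le> 1" by auto
  interpret B: bumpseq "dl \<epsilon>" "\<lambda>K. ell \<epsilon> K / 2" by (rule bumpseq_dl[OF e0])
  have R0: "ell \<epsilon> 0 / 2 = 1 / 2" by (simp add: ell0)
  show "\<exists>c>0. \<exists>a::real \<Rightarrow> real.
       smooth_real a \<and> (\<exists>x. a x \<noteq> 0) \<and> closure {x. a x \<noteq> 0} \<subseteq> {-2..2} \<and>
       (\<forall>n::nat. n \<ge> 1 \<longrightarrow> (\<forall>\<theta>\<in>{-pi..pi}.
          norm (Lpoly a n \<theta>) \<le>
            c * real n * exp (- (1 / (12 * exp 1) * \<epsilon> * real n * \<bar>\<theta>\<bar>) /
               (ln (exp 1 + real n * \<bar>\<theta>\<bar>)) powr (1 + \<epsilon>))))"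
  proof (rule exI[of _ "200"], rule conjI, simp, rule exI[of _ "B.A 0"], intro conjI allI impI ballI)
    show "smooth_real (B.A 0)" by (rule B.smooth_A)
    show "\<exists>x. B.A 0 x \<noteq> 0"
    proof
      have "\<bar>phi 0 - B.A 0 0\<bar> \<le> 1/2" using B.A0_phi[of 0] R0 by simp
      then show "B.A 0 0 \<noteq> 0" by (auto simp: phi_def)
    qed
    have "{x. B.A 0 x \<noteq> 0} \<subseteq> {-2..2}"
    proof
      fix x assume "x \<in> {x. B.A 0 x \<noteq> 0}"
      then have "\<not> (1 + ell \<epsilon> 0 / 2 < \<bar>x\<bar>)" using B.A_supp by auto
      then show "x \<in> {-2..2}" using R0 by auto
    qed
    then show "closure {x. B.A 0 x \<noteq> 0} \<subseteq> {-2..2}"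
      by (rule closure_minimal) simp
    fix n :: nat and \<theta> :: real
    assume n: "1 \<le> n" and th: "\<theta> \<in> {-pi..pi}"
    have tha: "\<bar>\<theta>\<bar> \<le> pi" using th by auto
    show "norm (Lpoly (B.A 0) n \<theta>) \<le>
            200 * real n * exp (- (1 / (12 * exp 1) * \<epsilon> * real n * \<bar>\<theta>\<bar>) /
               (ln (exp 1 + real n * \<bar>\<theta>\<bar>)) powr (1 + \<epsilon>))"
    proof (rule final_numeric[OF n tha e0 e1 norm_ge_zero])
      fix k
      have "(\<bar>\<theta>\<bar> / 3) ^ k \<le> cmod (1 - cis \<theta>) ^ k"
        by (rule power_mono[OF cis_lower[OF tha]]) simp
      then have "norm (Lpoly (B.A 0) n \<theta>) * (\<bar>\<theta>\<bar> / 3) ^ k \<le> norm (Lpoly (B.A 0) n \<theta>) * cmod (1 - cis \<theta>) ^ k"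
        by (rule mult_left_mono) simp
      also have "\<dots> = cmod ((1 - cis \<theta>) ^ k * Lpoly (B.A 0) n \<theta>)" by (simp add: norm_mult norm_power)
      also have "\<dots> \<le> real (4 * n + k + 1) * (1 / real n) ^ k * B.Pm k"
        by (rule B.main_est[OF _ n]) (simp add: R0)
      finally show "norm (Lpoly (B.A 0) n \<theta>) * (\<bar>\<theta>\<bar> / 3) ^ k \<le> real (4 * n + k + 1) * (1 / real n) ^ k * B.Pm k" .
    next
      fix k
      show "B.Pm k \<le> (2 * (real k + exp 1) * ln (real k + exp 1) powr (1 + \<epsilon>) / \<epsilon>) ^ k"
        by (rule Pm_bound[OF e0])
    qed
  qed
qed

end
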